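(* In the meta-RL setting described in the context, assuming $D(P_{\mathcal M_{1:n}}\|Q_{\mathcal M_{1:n}})<\infty$, $$\mathbb E_{\theta,\mathcal M_{1:n}}\big[J_{\mathcal M_{1:n}}(\theta)-J_{\mathcal U}(\theta)\big]\le\sqrt{\frac{2I(\theta,\phi_{1:n};\mathcal M_{1:n})+2D(P_{\mathcal M_{1:n}}\|Q_{\mathcal M_{1:n}})}{n(1-\gamma)^2}},$$ where the expectation and mutual information are under $\mathcal M_{1:n}\sim P_{\mathcal M_{1:n}}$, $\theta\sim P_{\theta|\mathcal M_{1:n}}$, $\phi_i\sim P_{\phi|\mathcal M_i,\theta}$.
   Context: An MDP $\mathcal M=(\mathcal S,\mathcal A,\mathcal P,\rho,r,\gamma,H)$ has finite state and action spaces, transition kernel $\mathcal P$, initial distribution $\rho$, reward $r(s,a)\in[0,1]$, discount $\gamma\in[0,1)$ and finite horizon $H$. A policy $\pi_\phi$ is parameterized by $\phi$; a trajectory $\omega=\{s_h,a_h,r_h,s_{h+1}\}_{h=0}^H$ has law $P_{\omega|\mathcal M,\phi}=\rho(s_0)\prod_{h=0}^H\pi_\phi(a_h|s_h)\mathcal P(s_{h+1}|s_h,a_h)$, and $J(\pi_\phi,\mathcal M)=\mathbb E_{\omega\sim P_{\omega|\mathcal M,\phi}}[\sum_{j=0}^H\gamma^jr_j]$. Training MDPs $\mathcal M_1,\dots,\mathcal M_n$ are i.i.d. from a training environment $\mathcal T$ (a distribution over MDPs); $P_{\mathcal M_{1:n}}=\mathcal T^{\otimes n}$, and $Q_{\mathcal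 M_{1:n}}=\mathcal U^{\otimes n}$ for a testing environment $\mathcal U$. A meta-learner outputs $\theta$ via a kernel $P_{\theta|\mathcal M_{1:n}}$, and an adaptation rule gives task-specific parameters $\phi\sim P_{\phi|\mathcal M,\theta}$. Empirical objective $J_{\mathcal M_{1:n}}(\theta)=\frac1n\sum_{i=1}^n\mathbb E_{\phi_i\sim P_{\phi|\mathcal M_i,\theta}}[J(\pi_{\phi_i},\mathcal M_i)]$; population objective $J_{\mathcal U}(\theta)=\mathbb E_{\mathcal M\sim\mathcal U}\mathbb E_{\phi\sim P_{\phi|\mathcal M,\theta}}[J(\pi_\phi,\mathcal M)]$. $D$ is KL divergence, $I$ mutual information. *)

theory Defs
  imports "HOL-Probability.Probability"
begin

text \<open>The discount gamma and horizon H are shared by all MDPs of the meta-learning problem and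
  are passed as separate parameters.\<close>

record ('s, 'a) mdp =
  init  :: "'s pmf"
  trans :: "'s \<Rightarrow> 'a \<Rightarrow> 's pmf"
  rew   :: "'s \<Rightarrow> 'a \<Rightarrow> real"

definition valid_mdp :: "('s, 'a) mdp \<Rightarrow> bool" where
  "valid_mdp M \<longleftrightarrow> (\<forall>s a. 0 \<le> rew M s a \<and> rew M s a \<le> 1)"

text \<open>Trajectory segment started in state s: steps h, h-1, ..., 0 remaining, each step a list
  entry (s_j, a_j, r_j, s_{j+1}).\<close>
primrec traj :: "('s, 'a) mdp \<Rightarrow> ('s \<Rightarrow> 'a pmf) \<Rightarrow> nat \<Rightarrow> 's \<Rightarrow> ('s \<times> 'a \<times> real \<times> 's) list pmf" where
  "traj M pol1 0 s =
     bind_pmf (pol1 s) (\<lambda>a. bind_pmf (trans M s a) (\<lambda>s'. return_pmf [(s, a, rew M s a, s')]))"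
| "traj M pol1 (Suc h) s =
     bind_pmf (pol1 s) (\<lambda>a. bind_pmf (trans M s a) (\<lambda>s'.
       bind_pmf (traj M pol1 h s') (\<lambda>rest. return_pmf ((s, a, rew M s a, s') # rest))))"

definition traj_law :: "nat \<Rightarrow> ('s, 'a) mdp \<Rightarrow> ('s \<Rightarrow> 'a pmf) \<Rightarrow> ('s \<times> 'a \<times> real \<times> 's) list pmf" where
  "traj_law H M pol1 = bind_pmf (init M) (traj M pol1 H)"

definition Jret :: "real \<Rightarrow> nat \<Rightarrow> ('s \<Rightarrow> 'a pmf) \<Rightarrow> ('s, 'a) mdp \<Rightarrow> real" where
  "Jret \<gamma> H pol1 M = measure_pmf.expectation (traj_law H M pol1)
      (\<lambda>\<omega>. \<Sum>j<length \<omega>. \<gamma> ^ j * fst (snd (snd (\<omega> ! j))))"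

text \<open>Empirical objective J_{M_{1:n}}(theta); m i is the i-th training MDP (i < n),
  Ka M theta is the adaptation kernel P_{phi|M,theta}, pol phi is the policy pi_phi.\<close>
definition emp_obj :: "real \<Rightarrow> nat \<Rightarrow> ('p \<Rightarrow> 's \<Rightarrow> 'a pmf) \<Rightarrow> (('s,'a) mdp \<Rightarrow> 't \<Rightarrow> 'p measure)
      \<Rightarrow> nat \<Rightarrow> (nat \<Rightarrow> ('s,'a) mdp) \<Rightarrow> 't \<Rightarrow> real" where
  "emp_obj \<gamma> H pol Ka n m \<theta> =
     (1 / real n) * (\<Sum>i<n. \<integral>\<phi>. Jret \<gamma> H (pol \<phi>) (m i) \<partial>(Ka (m i) \<theta>))"

definition pop_obj :: "real \<Rightarrow> nat \<Rightarrow> ('p \<Rightarrow> 's \<Rightarrow> 'a pmf) \<Rightarrow> (('s,'a) mdp \<Rightarrow> 't \<Rightarrow> 'p measure)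
      \<Rightarrow> ('s,'a) mdp measure \<Rightarrow> 't \<Rightarrow> real" where
  "pop_obj \<gamma> H pol Ka U \<theta> = (\<integral>M. (\<integral>\<phi>. Jret \<gamma> H (pol \<phi>) M \<partial>(Ka M \<theta>)) \<partial>U)"

definition joint_law :: "('s,'a) mdp measure \<Rightarrow> 't measure \<Rightarrow> 'p measure \<Rightarrow> nat
      \<Rightarrow> (nat \<Rightarrow> ('s,'a) mdp) measure \<Rightarrow> ((nat \<Rightarrow> ('s,'a) mdp) \<Rightarrow> 't measure)
      \<Rightarrow> (('s,'a) mdp \<Rightarrow> 't \<Rightarrow> 'p measure)
      \<Rightarrow> ((nat \<Rightarrow> ('s,'a) mdp) \<times> 't \<times> (nat \<Rightarrow> 'p)) measure" where
  "joint_law MSp \<Theta> \<Phi> n PM Kt Ka =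
     PM \<bind> (\<lambda>m. Kt m \<bind> (\<lambda>\<theta>.
       distr (PiM {..<n} (\<lambda>i. Ka (m i) \<theta>))
             (PiM {..<n} (\<lambda>_. MSp) \<Otimes>\<^sub>M (\<Theta> \<Otimes>\<^sub>M PiM {..<n} (\<lambda>_. \<Phi>)))
             (\<lambda>\<phi>. (m, \<theta>, \<phi>))))"

text \<open>D(P || Q); note the library's argument order KL_divergence b Q P.\<close>
definition KLdiv :: "'a measure \<Rightarrow> 'a measure \<Rightarrow> real" where
  "KLdiv P Q = KL_divergence (exp 1) Q P"

definition KL_finite :: "'a measure \<Rightarrow> 'a measure \<Rightarrow> bool" where
  "KL_finite P Q \<longleftrightarrow> absolutely_continuous Q P \<and> integrable P (entropy_density (exp 1) Q P)"

definition MI_finite :: "'c measure \<Rightarrow> 'a measure \<Rightarrow> 'b measure \<Rightarrow> ('c \<Rightarrow> 'a) \<Rightarrow> ('c \<Rightarrow> 'b) \<Rightarrow> bool" where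
  "MI_finite M S T X Y \<longleftrightarrow>
     KL_finite (distr M (S \<Otimes>\<^sub>M T) (\<lambda>x. (X x, Y x))) (distr M S X \<Otimes>\<^sub>M distr M T Y)"

end

theory Submission
  imports Defs
begin

lemma traj_props:
  assumes "valid_mdp M"
  shows "\<omega> \<in> set_pmf (traj M pol1 h s) \<Longrightarrow>
         length \<omega> = Suc h \<and> (\<forall>e\<in>set \<omega>. 0 \<le> fst (snd (snd e)) \<and> fst (snd (snd e)) \<le> 1)"
proof (induction h arbitrary: s \<omega>)
  case 0
  then show ?case using assms by (auto simp: valid_mdp_def)
next
  case (Suc h)
  then show ?case using assms by (fastforce simp: valid_mdp_def)
qed

lemma Jret_bounds:
  assumes v: "valid_mdp M" and g: "0 \<le> \<gamma>" "\<gamma> < 1"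
  shows "0 \<le> Jret \<gamma> H pol1 M \<and> Jret \<gamma> H pol1 M \<le> 1 / (1 - \<gamma>)"
proof -
  define f where "f \<omega> = (\<Sum>j<length \<omega>. \<gamma> ^ j * fst (snd (snd (\<omega> ! j))))" for \<omega> :: "('a \<times> 'b \<times> real \<times> 'a) list"
  have fb: "0 \<le> f \<omega> \<and> f \<omega> \<le> 1 / (1 - \<gamma>)" if om: "\<omega> \<in> set_pmf (traj_law H M pol1)" for \<omega>
  proof -
    obtain s where "\<omega> \<in> set_pmf (traj M pol1 H s)" using om unfolding traj_law_def set_bind_pmf by blast
    from traj_props[OF v this] have len: "length \<omega> = Suc H"
      and r: "\<And>j. j < length \<omega> \<Longrightarrow> 0 \<le> fst (snd (snd (\<omega> ! j))) \<and> fst (snd (snd (\<omega> ! j))) \<le> 1"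
      by (auto simp: nth_mem)
    have "0 \<le> f \<omega>" unfolding f_def using r g by (intro sum_nonneg) auto
    moreover have "f \<omega> \<le> (\<Sum>j<Suc H. \<gamma> ^ j)"
      unfolding f_def len[symmetric] using r g
      by (intro sum_mono) (auto intro!: mult_left_le)
    moreover have "(\<Sum>j<Suc H. \<gamma> ^ j) \<le> 1 / (1 - \<gamma>)"
    proof -
      have "(\<Sum>j<Suc H. \<gamma> ^ j) = (1 - \<gamma> ^ Suc H) / (1 - \<gamma>)"
        using g by (subst sum_gp_strict) auto
      also have "\<dots> \<le> 1 / (1 - \<gamma>)" using g by (intro divide_right_mono) auto
      finally show ?thesis .
    qed
    ultimately show ?thesis by linarith
  qed
  have int: "integrable (measure_pmf (traj_law H M pol1)) f"
    by (rule measure_pmf.integrable_const_bound[where B="1 / (1 - \<gamma>)"])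
       (use fb in \<open>auto simp: AE_measure_pmf_iff\<close>)
  have "0 \<le> measure_pmf.expectation (traj_law H M pol1) f"
    by (rule integral_nonneg_AE) (use fb in \<open>auto simp: AE_measure_pmf_iff\<close>)
  moreover have "measure_pmf.expectation (traj_law H M pol1) f \<le> measure_pmf.expectation (traj_law H M pol1) (\<lambda>_. 1 / (1 - \<gamma>))"
    by (rule integral_mono_AE[OF int]) (use fb in \<open>auto simp: AE_measure_pmf_iff\<close>)
  ultimately show ?thesis unfolding Jret_def f_def[symmetric] by simp
qed

lemma measurable_PiM_kernel:
  fixes K :: "'i \<Rightarrow> 'a \<Rightarrow> 'b measure"
  assumes I: "finite I" and K: "\<And>i. i \<in> I \<Longrightarrow> K i \<in> measurable M (prob_algebra N)"
  shows "(\<lambda>x. PiM I (\<lambda>i. K i x)) \<in> measurable M (prob_algebra (PiM I (\<lambda>_. N)))"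
proof (rule measurable_prob_algebra_generated[where \<Omega>="\<Pi>\<^sub>E i\<in>I. space N" and G="prod_algebra I (\<lambda>_. N)"])
  show "sets (PiM I (\<lambda>_. N)) = sigma_sets (\<Pi>\<^sub>E i\<in>I. space N) (prod_algebra I (\<lambda>_. N))"
    by (rule sets_PiM)
  show "Int_stable (prod_algebra I (\<lambda>_. N))" by (rule Int_stable_prod_algebra)
  show "prod_algebra I (\<lambda>_. N) \<subseteq> Pow (\<Pi>\<^sub>E i\<in>I. space N)" by (rule prod_algebra_sets_into_space)
  have Kx: "prob_space (K i x) \<and> sets (K i x) = sets N" if "i \<in> I" "x \<in> space M" for i x
    using measurable_space[OF K[OF that(1)] that(2)] by (simp add: space_prob_algebra)
  fix a assume a: "a \<in> space M"
  show "prob_space (PiM I (\<lambda>i. K i a))" by (rule prob_space_PiM) (use Kx a in auto)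
  show "sets (PiM I (\<lambda>i. K i a)) = sets (PiM I (\<lambda>_. N))"
    by (rule sets_PiM_cong) (use Kx a in auto)
next
  have Kx: "prob_space (K i x) \<and> sets (K i x) = sets N" if "i \<in> I" "x \<in> space M" for i x
    using measurable_space[OF K[OF that(1)] that(2)] by (simp add: space_prob_algebra)
  fix A assume "A \<in> prod_algebra I (\<lambda>_. N)"
  then obtain X where A: "A = (\<Pi>\<^sub>E i\<in>I. X i)" and X: "X \<in> (\<Pi> j\<in>I. sets N)"
    unfolding prod_algebra_eq_finite[OF I] by auto
  have eq: "emeasure (PiM I (\<lambda>i. K i a)) A = (\<Prod>i\<in>I. emeasure (K i a) (X i))" if a: "a \<in> space M" for a
  proof -
    define L where "L i = (if i \<in> I then K i a else count_space {})" for i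
    have sfL: "sigma_finite_measure (L i)" for i
    proof (cases "i \<in> I")
      case True
      then have "prob_space (K i a)" using Kx a by auto
      then show ?thesis using True by (simp add: L_def prob_space_imp_sigma_finite)
    next
      case False
      then show ?thesis by (simp add: L_def sigma_finite_measure_count_space_finite)
    qed
    interpret L: product_sigma_finite L by (simp add: product_sigma_finite_def sfL)
    have "PiM I (\<lambda>i. K i a) = PiM I L" by (rule PiM_cong) (auto simp: L_def)
    then have "emeasure (PiM I (\<lambda>i. K i a)) A = emeasure (PiM I L) (\<Pi>\<^sub>E i\<in>I. X i)" by (simp add: A)
    also have "\<dots> = (\<Prod>i\<in>I. emeasure (L i) (X i))"
      by (rule L.emeasure_PiM[OF I]) (use X Kx a in \<open>auto simp: L_def\<close>)
    also have "\<dots> = (\<Prod>i\<in>I. emeasure (K i a) (X i))" by (simp add: L_def)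
    finally show ?thesis .
  qed
  have "(\<lambda>a. \<Prod>i\<in>I. emeasure (K i a) (X i)) \<in> borel_measurable M"
  proof (rule borel_measurable_prod_ennreal)
    fix i assume i: "i \<in> I"
    show "(\<lambda>a. emeasure (K i a) (X i)) \<in> borel_measurable M"
      using measurable_compose[OF measurable_prob_algebraD[OF K[OF i]] measurable_emeasure_subprob_algebra, of "X i"] X i
      by auto
  qed
  then show "(\<lambda>a. emeasure (PiM I (\<lambda>i. K i a)) A) \<in> borel_measurable M"
    by (rule measurable_cong[THEN iffD2, rotated]) (simp add: eq)
qed



lemma hoeff_prod:
  fixes h :: "'m \<Rightarrow> real" and U :: "'m measure"
  assumes U: "prob_space U" and hm[measurable]: "h \<in> borel_measurable U"
    and hb: "\<And>M. M \<in> space U \<Longrightarrow> 0 \<le> h M \<and> h M \<le> B"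
    and n: "n > 0" and l: "l > 0"
  shows "(\<integral>\<^sup>+y. ennreal (exp (l * ((1 / real n) * (\<Sum>i<n. h (y i)) - (\<integral>M. h M \<partial>U)))) \<partial>PiM {..<n} (\<lambda>_. U))
         \<le> ennreal (exp (l\<^sup>2 * B\<^sup>2 / (8 * real n)))"
proof -
  interpret U: prob_space U by fact
  interpret PS: product_sigma_finite "\<lambda>_. U" by unfold_locales
  interpret hb: interval_bounded_random_variable U h 0 B
    by unfold_locales (auto intro!: AE_I2 dest: hb)
  define \<mu> where "\<mu> = (\<integral>M. h M \<partial>U)"
  define l' where "l' = l / real n"
  have l': "l' > 0" using l n by (simp add: l'_def)
  have eq: "ennreal (exp (l * ((1 / real n) * (\<Sum>i<n. h (y i)) - \<mu>))) =
            (\<Prod>i<n. ennreal (exp (l' * (h (y i) - \<mu>))))" for y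
  proof -
    have "(\<Sum>i<n. l' * (h (y i) - \<mu>)) = l' * (\<Sum>i<n. h (y i)) - real n * (l' * \<mu>)"
      by (simp add: right_diff_distrib sum_subtractf sum_distrib_left)
    also have "\<dots> = l * ((1 / real n) * (\<Sum>i<n. h (y i)) - \<mu>)"
      using n by (simp add: l'_def field_simps)
    finally have "l * ((1 / real n) * (\<Sum>i<n. h (y i)) - \<mu>) = (\<Sum>i<n. l' * (h (y i) - \<mu>))" ..
    then show ?thesis by (simp add: exp_sum prod_ennreal)
  qed
  have "(\<integral>\<^sup>+y. ennreal (exp (l * ((1 / real n) * (\<Sum>i<n. h (y i)) - \<mu>))) \<partial>PiM {..<n} (\<lambda>_. U))
      = (\<integral>\<^sup>+y. (\<Prod>i<n. ennreal (exp (l' * (h (y i) - \<mu>)))) \<partial>PiM {..<n} (\<lambda>_. U))"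
    by (intro nn_integral_cong) (rule eq)
  also have "\<dots> = (\<Prod>i<n. \<integral>\<^sup>+M. ennreal (exp (l' * (h M - \<mu>))) \<partial>U)"
    by (rule PS.product_nn_integral_prod) auto
  also have "\<dots> \<le> (\<Prod>i<n. ennreal (exp (l'\<^sup>2 * (B - 0)\<^sup>2 / 8)))"
    by (intro prod_mono_ennreal) (use hb.Hoeffdings_lemma_nn_integral[OF l'] in \<open>simp add: \<mu>_def\<close>)
  also have "\<dots> = ennreal (exp (l\<^sup>2 * B\<^sup>2 / (8 * real n)))"
  proof -
    have "(\<Prod>i<n. exp (l'\<^sup>2 * (B - 0)\<^sup>2 / 8)) = exp (real n * (l'\<^sup>2 * B\<^sup>2 / 8))"
      by (simp add: exp_of_nat_mult[symmetric])
    also have "real n * (l'\<^sup>2 * B\<^sup>2 / 8) = l\<^sup>2 * B\<^sup>2 / (8 * real n)"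
      using n by (simp add: l'_def power2_eq_square field_simps)
    finally show ?thesis by (simp add: prod_ennreal ennreal_power)
  qed
  finally show ?thesis by (simp add: \<mu>_def)
qed


lemma DV:
  fixes f :: "'a \<Rightarrow> real"
  assumes P: "prob_space P" and Q: "prob_space Q" and sets: "sets P = sets Q"
    and fin: "KL_finite P Q"
    and f[measurable]: "f \<in> borel_measurable Q" and bnd: "\<And>x. x \<in> space Q \<Longrightarrow> \<bar>f x\<bar> \<le> C"
  shows "(\<integral>x. f x \<partial>P) \<le> KLdiv P Q + ln (\<integral>x. exp (f x) \<partial>Q)"
proof -
  interpret Q: prob_space Q by fact
  interpret P: prob_space P by fact
  have ac: "absolutely_continuous Q P" and ient: "integrable P (entropy_density (exp 1) Q P)"
    using fin unfolding KL_finite_def by auto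
  define r where "r x = enn2real (RN_deriv Q P x)" for x
  have r_meas[measurable]: "r \<in> borel_measurable Q" unfolding r_def by measurable
  have r_nn: "r x \<ge> 0" for x unfolding r_def by simp
  have ed: "entropy_density (exp 1) Q P = (\<lambda>x. ln (r x))"
    by (auto simp: entropy_density_def r_def log_def fun_eq_iff)
  have KL: "KLdiv P Q = (\<integral>x. ln (r x) \<partial>P)"
    unfolding KLdiv_def KL_divergence_def ed ..
  have iln: "integrable P (\<lambda>x. ln (r x))" using ient ed by simp
  have sfP: "sigma_finite_measure P" by unfold_locales
  have spq: "space P = space Q" using sets by (rule sets_eq_imp_space_eq)
  have fP[measurable]: "f \<in> borel_measurable P" using f unfolding measurable_cong_sets[OF sets refl] .
  have intfQ: "integrable Q f"
    by (intro Q.integrable_const_bound[where B=C] AE_I2) (auto dest!: bnd simp: abs_le_iff)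
  have intfP: "integrable P f"
    by (intro P.integrable_const_bound[where B=C] AE_I2) (auto dest!: bnd simp: abs_le_iff spq)
  define Z where "Z = (\<integral>x. exp (f x) \<partial>Q)"
  have intexp: "integrable Q (\<lambda>x. exp (f x))"
    by (intro Q.integrable_const_bound[where B="exp C"] AE_I2) (auto dest!: bnd simp: abs_le_iff)
  have "(\<integral>x. exp (-C) \<partial>Q) \<le> Z"
    unfolding Z_def by (intro integral_mono_AE intexp AE_I2) (auto dest!: bnd simp: abs_le_iff)
  then have Zpos: "Z > 0" by (simp add: Q.prob_space) (smt (verit) exp_gt_zero)
  have int1: "integrable P (\<lambda>x. f x - ln (r x) - ln Z)"
    using intfP iln by auto
  have "(\<integral>x. f x \<partial>P) - KLdiv P Q - ln Z = (\<integral>x. f x - ln (r x) - ln Z \<partial>P)"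
    unfolding KL using intfP iln by (simp add: P.prob_space)
  also have "\<dots> = (\<integral>x. r x * (f x - ln (r x) - ln Z) \<partial>Q)"
    unfolding r_def by (rule Q.RN_deriv_integral[OF sfP ac sets]) measurable
  also have "\<dots> \<le> (\<integral>x. exp (f x) / Z - r x \<partial>Q)"
  proof (rule integral_mono)
    show "integrable Q (\<lambda>x. r x * (f x - ln (r x) - ln Z))"
    proof -
      have mg: "(\<lambda>x. f x - ln (r x) - ln Z) \<in> borel_measurable Q" by measurable
      show ?thesis
        using Q.RN_deriv_integrable[OF sfP ac sets mg] int1 unfolding r_def by simp
    qed
    have ir: "integrable Q r"
      using Q.RN_deriv_integrable[OF sfP ac sets, of "\<lambda>_. 1"] unfolding r_def by simp
    show "integrable Q (\<lambda>x. exp (f x) / Z - r x)"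
      using intexp ir by auto
    fix x
    show "r x * (f x - ln (r x) - ln Z) \<le> exp (f x) / Z - r x"
    proof (cases "r x = 0")
      case True then show ?thesis using Zpos by simp
    next
      case False
      then have rp: "r x > 0" using r_nn[of x] by simp
      define t where "t = exp (f x) / (Z * r x)"
      have tp: "t > 0" unfolding t_def using rp Zpos by simp
      have "ln t = f x - ln (r x) - ln Z"
        unfolding t_def using rp Zpos by (simp add: ln_div ln_mult)
      moreover have "ln t \<le> t - 1" using tp by (rule ln_le_minus_one)
      ultimately have "r x * (f x - ln (r x) - ln Z) \<le> r x * (t - 1)"
        using rp by (intro mult_left_mono) auto
      also have "r x * (t - 1) = exp (f x) / Z - r x"
        unfolding t_def using rp Zpos by (simp add: field_simps)
      finally show ?thesis .
    qed
  qed
  also have "\<dots> = 0"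
  proof -
    have ir: "integrable Q r"
      using Q.RN_deriv_integrable[OF sfP ac sets, of "\<lambda>_. 1"] unfolding r_def by simp
    have "(\<integral>x. r x \<partial>Q) = 1"
      using Q.RN_deriv_integral[OF sfP ac sets, of "\<lambda>_. 1"] unfolding r_def by (simp add: P.prob_space)
    moreover have "(\<integral>x. exp (f x) / Z \<partial>Q) = 1" unfolding Z_def using Zpos Z_def by simp
    ultimately show ?thesis using intexp ir by simp
  qed
  finally show ?thesis unfolding Z_def by simp
qed

lemma mcong: "sets M = sets M' \<Longrightarrow> measurable M = measurable M'"
  by (rule ext) (rule measurable_cong_sets; simp)

lemma abstract_bound:
  fixes J :: "('y \<times> 'x) measure" and SX :: "'x measure" and SY :: "'y measure"
    and G :: "'x \<Rightarrow> 'y \<Rightarrow> real" and Gbar :: "'x \<Rightarrow> real"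
  assumes J: "prob_space J" and sJ: "sets J = sets (SY \<Otimes>\<^sub>M SX)"
    and QY: "prob_space QY" and sQY: "sets QY = sets SY"
    and Gm[measurable]: "(\<lambda>(x,y). G x y) \<in> borel_measurable (SX \<Otimes>\<^sub>M SY)"
    and Gbm[measurable]: "Gbar \<in> borel_measurable SX"
    and Gb: "\<And>x y. x \<in> space SX \<Longrightarrow> y \<in> space SY \<Longrightarrow> \<bar>G x y\<bar> \<le> c"
    and Gbb: "\<And>x. x \<in> space SX \<Longrightarrow> \<bar>Gbar x\<bar> \<le> c"
    and s: "s > 0"
    and hoeff: "\<And>x l. x \<in> space SX \<Longrightarrow> l > 0 \<Longrightarrow>
                  (\<integral>\<^sup>+y. ennreal (exp (l * (G x y - Gbar x))) \<partial>QY) \<le> ennreal (exp (l\<^sup>2 * s))"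
    and MI: "KL_finite (distr J (SX \<Otimes>\<^sub>M SY) (\<lambda>z. (snd z, fst z))) (distr J SX snd \<Otimes>\<^sub>M distr J SY fst)"
    and KLf: "KL_finite (distr J SY fst) QY"
  shows "(\<integral>z. G (snd z) (fst z) - Gbar (snd z) \<partial>J)
     \<le> 2 * sqrt (s * (KLdiv (distr J (SX \<Otimes>\<^sub>M SY) (\<lambda>z. (snd z, fst z))) (distr J SX snd \<Otimes>\<^sub>M distr J SY fst)
                   + KLdiv (distr J SY fst) QY))
     \<and> 0 \<le> KLdiv (distr J (SX \<Otimes>\<^sub>M SY) (\<lambda>z. (snd z, fst z))) (distr J SX snd \<Otimes>\<^sub>M distr J SY fst)
                   + KLdiv (distr J SY fst) QY"
proof -
  interpret J: prob_space J by fact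
  interpret QY: prob_space QY by fact
  define PX where "PX = distr J SX snd"
  define PY where "PY = distr J SY fst"
  define PXY where "PXY = distr J (SX \<Otimes>\<^sub>M SY) (\<lambda>z. (snd z, fst z))"
  define I where "I = KLdiv PXY (PX \<Otimes>\<^sub>M PY)"
  define D where "D = KLdiv PY QY"
  have mJ: "measurable J = measurable (SY \<Otimes>\<^sub>M SX)"
    by (rule mcong[OF sJ])
  have fstm[measurable]: "fst \<in> measurable J SY" unfolding mJ by measurable
  have sndm[measurable]: "snd \<in> measurable J SX" unfolding mJ by measurable
  have swm[measurable]: "(\<lambda>z. (snd z, fst z)) \<in> measurable J (SX \<Otimes>\<^sub>M SY)" unfolding mJ by measurable
  interpret PX: prob_space PX unfolding PX_def by (rule J.prob_space_distr) measurable
  interpret PY: prob_space PY unfolding PY_def by (rule J.prob_space_distr) measurable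
  interpret PXY: prob_space PXY unfolding PXY_def by (rule J.prob_space_distr) measurable
  interpret PP: pair_prob_space PX PY by unfold_locales
  interpret PQ: pair_prob_space PX QY by unfold_locales
  have sPX: "sets PX = sets SX" unfolding PX_def by simp
  have sPY: "sets PY = sets SY" unfolding PY_def by simp
  have spX: "space PX = space SX" unfolding PX_def by simp
  have spY: "space PY = space SY" unfolding PY_def by simp
  have spQ: "space QY = space SY" using sQY by (rule sets_eq_imp_space_eq)
  have sPP: "sets (PX \<Otimes>\<^sub>M PY) = sets (SX \<Otimes>\<^sub>M SY)" by (rule sets_pair_measure_cong[OF sPX sPY])
  have sPQ: "sets (PX \<Otimes>\<^sub>M QY) = sets (SX \<Otimes>\<^sub>M SY)" by (rule sets_pair_measure_cong[OF sPX sQY])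
  have sPXY: "sets PXY = sets (SX \<Otimes>\<^sub>M SY)" unfolding PXY_def by simp
  have spPP: "space (PX \<Otimes>\<^sub>M PY) = space (SX \<Otimes>\<^sub>M SY)" by (rule sets_eq_imp_space_eq[OF sPP])
  have spPQ: "space (PX \<Otimes>\<^sub>M QY) = space (SX \<Otimes>\<^sub>M SY)" by (rule sets_eq_imp_space_eq[OF sPQ])
  have mPX: "measurable PX = measurable SX" by (rule mcong[OF sPX])
  have mPY: "measurable PY = measurable SY" by (rule mcong[OF sPY])
  have mQY: "measurable QY = measurable SY" by (rule mcong[OF sQY])
  have mPP: "measurable (PX \<Otimes>\<^sub>M PY) = measurable (SX \<Otimes>\<^sub>M SY)" by (rule mcong[OF sPP])
  have mPQ: "measurable (PX \<Otimes>\<^sub>M QY) = measurable (SX \<Otimes>\<^sub>M SY)" by (rule mcong[OF sPQ])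
  have mYX: "measurable (SY \<Otimes>\<^sub>M PX) = measurable (SY \<Otimes>\<^sub>M SX)"
    by (rule mcong[OF sets_pair_measure_cong[OF refl sPX]])
  have Gm': "(\<lambda>(y,x). G x y) \<in> borel_measurable (SY \<Otimes>\<^sub>M SX)"
    using measurable_pair_swap[OF Gm] by (simp add: split_beta')
  have I0: "0 \<le> I"
    using DV[OF PXY.prob_space_axioms PP.prob_space_axioms _ MI[folded PXY_def PX_def PY_def], of "\<lambda>_. 0" 0]
    by (simp add: I_def sPXY sPP PP.prob_space)
  have D0: "0 \<le> D"
    using DV[OF PY.prob_space_axioms QY _ KLf[folded PY_def], of "\<lambda>_. 0" 0]
    by (simp add: D_def sPY sQY QY.prob_space)

  have key: "l * (\<integral>z. G (snd z) (fst z) - Gbar (snd z) \<partial>J) \<le> I + D + l\<^sup>2 * s" if l: "l > 0" for l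
  proof -
    define F where "F x y = l * (G x y - Gbar x)" for x y
    have Fm[measurable]: "(\<lambda>(x,y). F x y) \<in> borel_measurable (SX \<Otimes>\<^sub>M SY)"
      unfolding F_def by measurable
    have Fm': "(\<lambda>(y,x). exp (F x y)) \<in> borel_measurable (SY \<Otimes>\<^sub>M SX)"
      unfolding F_def using Gm' by measurable
    have Fb: "\<bar>F x y\<bar> \<le> 2 * l * c" if "x \<in> space SX" "y \<in> space SY" for x y
    proof -
      have "\<bar>G x y - Gbar x\<bar> \<le> 2 * c" using Gb[OF that] Gbb[OF that(1)] by linarith
      then show ?thesis unfolding F_def using l by (simp add: abs_mult mult_left_mono)
    qed
    have Fl: "- (2*l*c) \<le> F x y" and Fu: "F x y \<le> 2*l*c" if "x \<in> space SX" "y \<in> space SY" for x y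
      using Fb[OF that] by linarith+
    define E where "E y = (\<integral>x. exp (F x y) \<partial>PX)" for y
    define k where "k y = ln (E y)" for y
    have Em[measurable]: "E \<in> borel_measurable SY"
      unfolding E_def by (rule PX.borel_measurable_lebesgue_integral) (use Fm' in \<open>simp add: mYX\<close>)
    have km[measurable]: "k \<in> borel_measurable SY" unfolding k_def by measurable
    have intexpF: "integrable PX (\<lambda>x. exp (F x y))" if "y \<in> space SY" for y
    proof (rule PX.integrable_const_bound[where B="exp (2*l*c)"])
      show "AE x in PX. norm (exp (F x y)) \<le> exp (2 * l * c)"
        using Fb that by (intro AE_I2) (auto simp: spX abs_le_iff Fl Fu)
      show "(\<lambda>x. exp (F x y)) \<in> borel_measurable PX"
        unfolding mPX using Fm that by measurable
    qed
    have Eb: "exp (- (2*l*c)) \<le> E y \<and> E y \<le> exp (2*l*c)" if "y \<in> space SY" for y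
    proof
      have "(\<integral>x. exp (- (2*l*c)) \<partial>PX) \<le> E y"
        unfolding E_def using Fb that
        by (intro integral_mono_AE intexpF[OF that] AE_I2) (auto simp: spX abs_le_iff Fl Fu)
      then show "exp (- (2*l*c)) \<le> E y" by (simp add: PX.prob_space)
      have "E y \<le> (\<integral>x. exp (2*l*c) \<partial>PX)"
        unfolding E_def using Fb that
        by (intro integral_mono_AE intexpF[OF that] AE_I2) (auto simp: spX abs_le_iff Fl Fu)
      then show "E y \<le> exp (2*l*c)" by (simp add: PX.prob_space)
    qed
    have Epos: "E y > 0" if "y \<in> space SY" for y
      using Eb[OF that] by (smt (verit) exp_gt_zero)
    have kb: "\<bar>k y\<bar> \<le> 2*l*c" if "y \<in> space SY" for y
    proof -
      have "- (2*l*c) \<le> k y" unfolding k_def using Eb[OF that] Epos[OF that]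
        by (metis ln_exp ln_le_cancel_iff exp_gt_zero)
      moreover have "k y \<le> 2*l*c" unfolding k_def using Eb[OF that] Epos[OF that]
        by (metis ln_exp ln_le_cancel_iff exp_gt_zero)
      ultimately show ?thesis by linarith
    qed
    have kl: "- (2*l*c) \<le> k y" and ku: "k y \<le> 2*l*c" if "y \<in> space SY" for y
      using kb[OF that] by linarith+
    have step1: "(\<integral>p. F (fst p) (snd p) - k (snd p) \<partial>PXY) \<le> I + ln (\<integral>p. exp (F (fst p) (snd p) - k (snd p)) \<partial>(PX \<Otimes>\<^sub>M PY))"
      unfolding I_def
    proof (rule DV[OF PXY.prob_space_axioms PP.prob_space_axioms _ MI[folded PXY_def PX_def PY_def], where C="4*l*c"])
      show "sets PXY = sets (PX \<Otimes>\<^sub>M PY)" by (simp add: sPXY sPP)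
      show "(\<lambda>p. F (fst p) (snd p) - k (snd p)) \<in> borel_measurable (PX \<Otimes>\<^sub>M PY)"
        unfolding mPP using Fm by (measurable; simp add: split_beta')
      fix p assume "p \<in> space (PX \<Otimes>\<^sub>M PY)"
      then have "fst p \<in> space SX" "snd p \<in> space SY" by (auto simp: space_pair_measure spX spY)
      then show "\<bar>F (fst p) (snd p) - k (snd p)\<bar> \<le> 4*l*c"
        using Fb[of "fst p" "snd p"] kb[of "snd p"] by (simp add: abs_le_iff)
    qed
    have int_one: "(\<integral>p. exp (F (fst p) (snd p) - k (snd p)) \<partial>(PX \<Otimes>\<^sub>M PY)) = 1"
    proof -
      have intPP: "integrable (PX \<Otimes>\<^sub>M PY) (\<lambda>(x, y). exp (F x y - k y))"
        proof (rule        PP.P.integrable_const_bound[where B="exp (4*l*c)"])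
          show "AE p in PX \<Otimes>\<^sub>M PY. norm ((\<lambda>(x, y). exp (F x y - k y)) p) \<le> exp (4*l*c)"
          proof (intro AE_I2)
            fix p assume "p \<in> space (PX \<Otimes>\<^sub>M PY)"
            then have "fst p \<in> space SX" "snd p \<in> space SY" by (auto simp: space_pair_measure spX spY)
            then have "F (fst p) (snd p) - k (snd p) \<le> 4*l*c" using Fb[of "fst p" "snd p"] kb[of "snd p"] by (simp add: abs_le_iff)
            then show "norm ((\<lambda>(x, y). exp (F x y - k y)) p) \<le> exp (4*l*c)"
              by (simp add: split_beta')
          qed
          show "(\<lambda>(x, y). exp (F x y - k y)) \<in> borel_measurable (PX \<Otimes>\<^sub>M PY)"
            unfolding mPP using Fm by measurable
        qed
      have "(\<integral>p. exp (F (fst p) (snd p) - k (snd p)) \<partial>(PX \<Otimes>\<^sub>M PY))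
          = (\<integral>y. \<integral>x. exp (F x y - k y) \<partial>PX \<partial>PY)"
        using PP.integral_snd[OF intPP] by (simp add: split_beta')
      also have "\<dots> = (\<integral>y. 1 \<partial>PY)"
      proof (rule integral_cong_AE)
        show "AE y in PY. (\<integral>x. exp (F x y - k y) \<partial>PX) = 1"
        proof (intro AE_I2)
          fix y assume y: "y \<in> space PY"
          then have y': "y \<in> space SY" by (simp add: spY)
          have "(\<integral>x. exp (F x y - k y) \<partial>PX) = (\<integral>x. exp (F x y) / exp (k y) \<partial>PX)"
            by (simp add: exp_diff)
          also have "\<dots> = E y / exp (k y)" unfolding E_def by simp
          also have "exp (k y) = E y" unfolding k_def using Epos[OF y'] by simp
          finally show "(\<integral>x. exp (F x y - k y) \<partial>PX) = 1" using Epos[OF y'] by simp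
        qed
        show "(\<lambda>y. \<integral>x. exp (F x y - k y) \<partial>PX) \<in> borel_measurable PY"
          unfolding mPY
          by (rule PX.borel_measurable_lebesgue_integral) (use Fm' in \<open>simp add: mYX\<close>)
      qed simp
      finally show ?thesis by (simp add: PY.prob_space)
    qed
    have step2: "(\<integral>y. k y \<partial>PY) \<le> D + ln (\<integral>y. exp (k y) \<partial>QY)"
      unfolding D_def
    proof (rule DV[OF PY.prob_space_axioms QY _ KLf[folded PY_def], where C="2*l*c"])
      show "sets PY = sets QY" by (simp add: sPY sQY)
      show "k \<in> borel_measurable QY" unfolding mQY by measurable
      fix y assume "y \<in> space QY" then show "\<bar>k y\<bar> \<le> 2*l*c" using kb by (simp add: spQ)
    qed
    have mgf: "(\<integral>y. exp (k y) \<partial>QY) \<le> exp (l\<^sup>2 * s)"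
    proof -
      have "(\<integral>y. exp (k y) \<partial>QY) = (\<integral>y. \<integral>x. exp (F x y) \<partial>PX \<partial>QY)"
      proof (rule integral_cong_AE)
        show "AE y in QY. exp (k y) = (\<integral>x. exp (F x y) \<partial>PX)"
          using Epos by (intro AE_I2) (simp add: k_def E_def[symmetric] spQ)
      qed (auto simp: mQY intro!: Em[unfolded E_def])
      also have "\<dots> = (\<integral>x. \<integral>y. exp (F x y) \<partial>QY \<partial>PX)"
      proof -
        have int: "integrable (PX \<Otimes>\<^sub>M QY) (\<lambda>(x, y). exp (F x y))"
        proof (rule PQ.P.integrable_const_bound[where B="exp (2*l*c)"])
          show "AE p in PX \<Otimes>\<^sub>M QY. norm ((\<lambda>(x, y). exp (F x y)) p) \<le> exp (2*l*c)"
          proof (intro AE_I2)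
            fix p assume "p \<in> space (PX \<Otimes>\<^sub>M QY)"
            then have "fst p \<in> space SX" "snd p \<in> space SY" by (auto simp: space_pair_measure spX spQ)
            then have "F (fst p) (snd p) \<le> 2*l*c" using Fb[of "fst p" "snd p"] by (simp add: abs_le_iff)
            then show "norm ((\<lambda>(x, y). exp (F x y)) p) \<le> exp (2*l*c)"
              by (simp add: split_beta')
          qed
          show "(\<lambda>(x, y). exp (F x y)) \<in> borel_measurable (PX \<Otimes>\<^sub>M QY)"
            unfolding mPQ using Fm by measurable
        qed
        show ?thesis
          using PQ.integral_snd[OF int] PQ.integral_fst'[OF int] by simp
      qed
      also have "\<dots> \<le> (\<integral>x. exp (l\<^sup>2 * s) \<partial>PX)"
      proof (rule integral_mono_AE)
        show "integrable PX (\<lambda>x. exp (l\<^sup>2 * s))" by simp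
        show "integrable PX (\<lambda>x. \<integral>y. exp (F x y) \<partial>QY)"
        proof (rule PX.integrable_const_bound[where B="exp (2*l*c)"])
          show "AE x in PX. norm (\<integral>y. exp (F x y) \<partial>QY) \<le> exp (2*l*c)"
          proof (intro AE_I2)
            fix x assume x: "x \<in> space PX"
            have "(\<integral>y. exp (F x y) \<partial>QY) \<le> (\<integral>y. exp (2*l*c) \<partial>QY)"
            proof (rule integral_mono_AE)
              show "integrable QY (\<lambda>y. exp (F x y))"
              proof (rule QY.integrable_const_bound[where B="exp (2*l*c)"])
                show "AE y in QY. norm (exp (F x y)) \<le> exp (2 * l * c)"
                  using Fb x by (intro AE_I2) (auto simp: spX spQ abs_le_iff Fl Fu kl ku)
                show "(\<lambda>y. exp (F x y)) \<in> borel_measurable QY"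
                  unfolding mQY using Fm x by (measurable; simp add: spX)
              qed
              show "AE y in QY. exp (F x y) \<le> exp (2 * l * c)"
                using Fb x by (intro AE_I2) (auto simp: spX spQ abs_le_iff Fl Fu kl ku)
            qed simp
            moreover have "0 \<le> (\<integral>y. exp (F x y) \<partial>QY)" by simp
            ultimately show "norm (\<integral>y. exp (F x y) \<partial>QY) \<le> exp (2*l*c)"
              by (simp add: QY.prob_space)
          qed
          show "(\<lambda>x. \<integral>y. exp (F x y) \<partial>QY) \<in> borel_measurable PX"
            unfolding mPX
          proof (rule QY.borel_measurable_lebesgue_integral)
            show "(\<lambda>(x, y). exp (F x y)) \<in> borel_measurable (SX \<Otimes>\<^sub>M QY)"
              using Fm by (simp add: measurable_cong_sets[OF sets_pair_measure_cong[OF refl sQY] refl])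
          qed
        qed
        show "AE x in PX. (\<integral>y. exp (F x y) \<partial>QY) \<le> exp (l\<^sup>2 * s)"
        proof (intro AE_I2)
          fix x assume x: "x \<in> space PX"
          then have x': "x \<in> space SX" by (simp add: spX)
          have intq: "integrable QY (\<lambda>y. exp (F x y))"
          proof (rule QY.integrable_const_bound[where B="exp (2*l*c)"])
            show "AE y in QY. norm (exp (F x y)) \<le> exp (2 * l * c)"
              using Fb x' by (intro AE_I2) (auto simp: spQ abs_le_iff Fl Fu kl ku)
            show "(\<lambda>y. exp (F x y)) \<in> borel_measurable QY"
              unfolding mQY using Fm x' by measurable
          qed
          have "ennreal (\<integral>y. exp (F x y) \<partial>QY) = (\<integral>\<^sup>+y. ennreal (exp (F x y)) \<partial>QY)"
            by (rule nn_integral_eq_integral[symmetric]) (use intq in auto)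
          also have "\<dots> \<le> ennreal (exp (l\<^sup>2 * s))"
            using hoeff[OF x' l] by (simp add: F_def)
          finally show "(\<integral>y. exp (F x y) \<partial>QY) \<le> exp (l\<^sup>2 * s)"
            by (subst (asm) ennreal_le_iff) auto
        qed
      qed
      also have "\<dots> = exp (l\<^sup>2 * s)" by (simp add: PX.prob_space)
      finally show ?thesis .
    qed
    have Eint_pos: "0 < (\<integral>y. exp (k y) \<partial>QY)"
    proof -
      have "(\<integral>y. exp (- (2*l*c)) \<partial>QY) \<le> (\<integral>y. exp (k y) \<partial>QY)"
      proof (rule integral_mono_AE)
        show "integrable QY (\<lambda>y. exp (k y))"
        proof (rule QY.integrable_const_bound[where B="exp (2*l*c)"])
          show "AE y in QY. norm (exp (k y)) \<le> exp (2 * l * c)"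
            using kb by (intro AE_I2) (auto simp: spQ abs_le_iff Fl Fu kl ku)
        qed (simp add: mQY)
        show "AE y in QY. exp (- (2 * l * c)) \<le> exp (k y)"
          using kb by (intro AE_I2) (auto simp: spQ abs_le_iff Fl Fu kl ku)
      qed simp
      then show ?thesis by (simp add: QY.prob_space) (smt (verit) exp_gt_zero)
    qed
    have ln_mgf: "ln (\<integral>y. exp (k y) \<partial>QY) \<le> l\<^sup>2 * s"
      using mgf Eint_pos by (metis ln_exp ln_le_cancel_iff exp_gt_zero)
    have intF: "integrable PXY (\<lambda>p. F (fst p) (snd p))"
    proof (rule PXY.integrable_const_bound[where B="2*l*c"])
      show "AE p in PXY. norm (F (fst p) (snd p)) \<le> 2*l*c"
      proof (intro AE_I2)
        fix p assume "p \<in> space PXY"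
        then have "fst p \<in> space SX" "snd p \<in> space SY"
          by (auto simp: sets_eq_imp_space_eq[OF sPXY] space_pair_measure)
        then show "norm (F (fst p) (snd p)) \<le> 2*l*c" using Fb[of "fst p" "snd p"] by simp
      qed
      show "(\<lambda>p. F (fst p) (snd p)) \<in> borel_measurable PXY"
        unfolding measurable_cong_sets[OF sPXY refl] using Fm by (measurable; simp add: split_beta')
    qed
    have intk: "integrable PXY (\<lambda>p. k (snd p))"
    proof (rule PXY.integrable_const_bound[where B="2*l*c"])
      show "AE p in PXY. norm (k (snd p)) \<le> 2*l*c"
      proof (intro AE_I2)
        fix p assume "p \<in> space PXY"
        then have "snd p \<in> space SY"
          by (auto simp: sets_eq_imp_space_eq[OF sPXY] space_pair_measure)
        then show "norm (k (snd p)) \<le> 2*l*c" using kb by simp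
      qed
      show "(\<lambda>p. k (snd p)) \<in> borel_measurable PXY"
        unfolding measurable_cong_sets[OF sPXY refl] by measurable
    qed
    have kPY: "(\<integral>p. k (snd p) \<partial>PXY) = (\<integral>y. k y \<partial>PY)"
    proof -
      have k1: "(\<lambda>p. k (snd p)) \<in> borel_measurable (SX \<Otimes>\<^sub>M SY)" by measurable
      show ?thesis using integral_distr[OF swm k1] integral_distr[OF fstm km] by (simp add: PXY_def PY_def)
    qed
    have LHS: "l * (\<integral>z. G (snd z) (fst z) - Gbar (snd z) \<partial>J) = (\<integral>p. F (fst p) (snd p) \<partial>PXY)"
    proof -
      have "(\<integral>p. F (fst p) (snd p) \<partial>PXY) = (\<integral>z. F (snd z) (fst z) \<partial>J)"
      proof -
        have fm: "(\<lambda>p. F (fst p) (snd p)) \<in> borel_measurable (SX \<Otimes>\<^sub>M SY)"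
          using Fm by (simp add: split_beta')
        show ?thesis unfolding PXY_def using integral_distr[OF swm fm] by simp
      qed
      also have "\<dots> = l * (\<integral>z. G (snd z) (fst z) - Gbar (snd z) \<partial>J)"
        unfolding F_def by simp
      finally show ?thesis by simp
    qed
    have "(\<integral>p. F (fst p) (snd p) \<partial>PXY) = (\<integral>p. F (fst p) (snd p) - k (snd p) \<partial>PXY) + (\<integral>p. k (snd p) \<partial>PXY)"
      using intF intk by simp
    also have "\<dots> \<le> (I + ln 1) + (D + l\<^sup>2 * s)"
      using step1 int_one step2 ln_mgf kPY by simp
    finally show ?thesis using LHS by simp
  qed
  define V where "V = I + D"
  have V0: "V \<ge> 0" using I0 D0 by (simp add: V_def)
  define E0 where "E0 = (\<integral>z. G (snd z) (fst z) - Gbar (snd z) \<partial>J)"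
  have key': "l * E0 \<le> V + l\<^sup>2 * s" if "l > 0" for l using key[OF that] by (simp add: E0_def V_def)
  have "E0 \<le> 2 * sqrt (s * V)"
  proof (cases "V = 0")
    case True
    show ?thesis
    proof (rule ccontr)
      assume "\<not> ?thesis"
      then have E: "E0 > 0" using True by simp
      define l where "l = E0 / (2 * s)"
      have l: "l > 0" using E s by (simp add: l_def)
      have "l * E0 \<le> l * (l * s)" using key'[OF l] True by (simp add: power2_eq_square algebra_simps)
      then have "E0 \<le> l * s" using l by simp
      also have "l * s = E0 / 2" using s by (simp add: l_def)
      finally show False using E by simp
    qed
  next
    case False
    then have Vp: "V > 0" using V0 by simp
    define l where "l = sqrt (V / s)"
    have l: "l > 0" using Vp s by (simp add: l_def)
    have l2: "l\<^sup>2 * s = V" using Vp s by (simp add: l_def)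
    have "l * E0 \<le> 2 * V" using key'[OF l] l2 by simp
    then have "E0 \<le> 2 * V / l" using l by (simp add: field_simps)
    also have "2 * V / l = 2 * sqrt (s * V)"
    proof -
      have "sqrt (s * V) * l = sqrt (s * V * (V / s))" unfolding l_def by (rule real_sqrt_mult[symmetric])
      also have "s * V * (V / s) = V\<^sup>2" using s by (simp add: power2_eq_square)
      also have "sqrt (V\<^sup>2) = V" using Vp by simp
      finally have "sqrt (s * V) * l = V" .
      then show ?thesis using l by (simp add: field_simps)
    qed
    finally show ?thesis .
  qed
  then show ?thesis using V0
    unfolding E0_def V_def I_def D_def PXY_def PX_def PY_def by simp
qed



lemma joint_law_props:
  fixes MSp :: "'m measure" and \<Theta> :: "'t measure" and \<Phi> :: "'p measure"
    and Kt :: "(nat \<Rightarrow> 'm) \<Rightarrow> 't measure" and Ka :: "'m \<Rightarrow> 't \<Rightarrow> 'p measure"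
    and T :: "'m measure"
  assumes T: "prob_space T" "sets T = sets MSp"
    and Kt: "Kt \<in> measurable (PiM {..<n} (\<lambda>_. MSp)) (prob_algebra \<Theta>)"
    and Ka: "(\<lambda>(M, \<theta>). Ka M \<theta>) \<in> measurable (MSp \<Otimes>\<^sub>M \<Theta>) (prob_algebra \<Phi>)"
  defines "J \<equiv> PiM {..<n} (\<lambda>_. T) \<bind> (\<lambda>m. Kt m \<bind> (\<lambda>\<theta>.
       distr (PiM {..<n} (\<lambda>i. Ka (m i) \<theta>))
             (PiM {..<n} (\<lambda>_. MSp) \<Otimes>\<^sub>M (\<Theta> \<Otimes>\<^sub>M PiM {..<n} (\<lambda>_. \<Phi>)))
             (\<lambda>\<phi>. (m, \<theta>, \<phi>))))"
  shows "sets J = sets (PiM {..<n} (\<lambda>_. MSp) \<Otimes>\<^sub>M (\<Theta> \<Otimes>\<^sub>M PiM {..<n} (\<lambda>_. \<Phi>)))"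
    and "distr J (PiM {..<n} (\<lambda>_. MSp)) fst = PiM {..<n} (\<lambda>_. T)"
    and "prob_space J"
proof -
  define SY where "SY = PiM {..<n} (\<lambda>_. MSp)"
  define SX where "SX = \<Theta> \<Otimes>\<^sub>M PiM {..<n} (\<lambda>_. \<Phi>)"
  define S where "S = SY \<Otimes>\<^sub>M SX"
  define g where "g m \<theta> = distr (PiM {..<n} (\<lambda>i. Ka (m i) \<theta>)) S (\<lambda>\<phi>. (m, \<theta>, \<phi>))" for m \<theta>
  have Jdef: "J = PiM {..<n} (\<lambda>_. T) \<bind> (\<lambda>m. Kt m \<bind> g m)"
    unfolding J_def g_def S_def SX_def SY_def ..
  have Kai: "(\<lambda>x. Ka (fst x i) (snd x)) \<in> measurable (SY \<Otimes>\<^sub>M \<Theta>) (prob_algebra \<Phi>)" if "i < n" for i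
  proof -
    have "(\<lambda>x. (fst x i, snd x)) \<in> measurable (SY \<Otimes>\<^sub>M \<Theta>) (MSp \<Otimes>\<^sub>M \<Theta>)"
    proof (rule measurable_Pair)
      show "(\<lambda>x. fst x i) \<in> measurable (SY \<Otimes>\<^sub>M \<Theta>) MSp"
        unfolding SY_def using that
        by (intro measurable_compose[OF measurable_fst measurable_component_singleton]) auto
      show "snd \<in> measurable (SY \<Otimes>\<^sub>M \<Theta>) \<Theta>" by (rule measurable_snd)
    qed
    from measurable_compose[OF this Ka] show ?thesis by simp
  qed
  have PK: "(\<lambda>x. PiM {..<n} (\<lambda>i. Ka (fst x i) (snd x))) \<in> measurable (SY \<Otimes>\<^sub>M \<Theta>) (prob_algebra (PiM {..<n} (\<lambda>_. \<Phi>)))"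
    by (rule measurable_PiM_kernel) (use Kai in auto)
  have gm: "(\<lambda>(m, \<theta>). g m \<theta>) \<in> measurable (SY \<Otimes>\<^sub>M \<Theta>) (subprob_algebra S)"
  proof -
    have "(\<lambda>x. distr (PiM {..<n} (\<lambda>i. Ka (fst x i) (snd x))) S (\<lambda>\<phi>. (fst x, snd x, \<phi>))) \<in> measurable (SY \<Otimes>\<^sub>M \<Theta>) (subprob_algebra S)"
    proof (rule measurable_distr2[where f="\<lambda>x \<phi>. (fst x, snd x, \<phi>)"])
      show "(\<lambda>(x, \<phi>). (fst x, snd x, \<phi>)) \<in> measurable ((SY \<Otimes>\<^sub>M \<Theta>) \<Otimes>\<^sub>M PiM {..<n} (\<lambda>_. \<Phi>)) S"
        unfolding S_def SX_def by measurable
      show "(\<lambda>x. PiM {..<n} (\<lambda>i. Ka (fst x i) (snd x))) \<in> measurable (SY \<Otimes>\<^sub>M \<Theta>) (subprob_algebra (PiM {..<n} (\<lambda>_. \<Phi>)))"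
        by (rule measurable_prob_algebraD[OF PK])
    qed
    then show ?thesis by (simp add: g_def split_beta')
  qed
  have Ktm: "Kt \<in> measurable SY (subprob_algebra \<Theta>)"
    unfolding SY_def by (rule measurable_prob_algebraD[OF Kt])
  have Km: "(\<lambda>m. Kt m \<bind> g m) \<in> measurable SY (subprob_algebra S)"
    by (rule measurable_bind'[OF Ktm gm])
  have sT: "sets (PiM {..<n} (\<lambda>_. T)) = sets SY"
    unfolding SY_def by (rule sets_PiM_cong) (use T in auto)
  have spT: "space (PiM {..<n} (\<lambda>_. T)) = space SY" by (rule sets_eq_imp_space_eq[OF sT])
  interpret PT: prob_space "PiM {..<n} (\<lambda>_. T)" by (rule prob_space_PiM) (use T in auto)
  have ne: "space (PiM {..<n} (\<lambda>_. T)) \<noteq> {}" by (rule PT.not_empty)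
  have Km': "(\<lambda>m. Kt m \<bind> g m) \<in> measurable (PiM {..<n} (\<lambda>_. T)) (subprob_algebra S)"
    using Km by (simp add: measurable_cong_sets[OF sT refl])
  show sJ: "sets J = sets (PiM {..<n} (\<lambda>_. MSp) \<Otimes>\<^sub>M (\<Theta> \<Otimes>\<^sub>M PiM {..<n} (\<lambda>_. \<Phi>)))"
    unfolding Jdef S_def[symmetric, unfolded SY_def SX_def]
    by (rule sets_bind[OF sets_kernel[OF Km'] ne])
  have fstS: "fst \<in> measurable S SY" unfolding S_def by measurable
  have inner: "distr (Kt m \<bind> g m) SY fst = return SY m" if m: "m \<in> space SY" for m
  proof -
    have Ktm': "Kt m \<in> space (prob_algebra \<Theta>)" using measurable_space[OF Kt] m unfolding SY_def by auto
    then interpret KT: prob_space "Kt m" by (simp add: space_prob_algebra)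
    have sK: "sets (Kt m) = sets \<Theta>" using Ktm' by (simp add: space_prob_algebra)
    have spK: "space (Kt m) = space \<Theta>" by (rule sets_eq_imp_space_eq[OF sK])
    have gm1: "g m \<in> measurable (Kt m) (subprob_algebra S)"
    proof -
      have g1: "g m \<in> measurable \<Theta> (subprob_algebra S)"
        using measurable_Pair2[OF gm m] by simp
      show ?thesis using g1 unfolding measurable_cong_sets[OF sK refl] .
    qed
    have "distr (Kt m \<bind> g m) SY fst = Kt m \<bind> (\<lambda>\<theta>. distr (g m \<theta>) SY fst)"
      by (rule distr_bind[OF gm1 KT.not_empty fstS])
    also have "\<dots> = Kt m \<bind> (\<lambda>\<theta>. return SY m)"
    proof (rule bind_cong[OF refl])
      fix \<theta> assume \<theta>: "\<theta> \<in> space (Kt m)"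
      have \<theta>': "\<theta> \<in> space \<Theta>" using \<theta> spK by simp
      have "PiM {..<n} (\<lambda>i. Ka (m i) \<theta>) \<in> space (prob_algebra (PiM {..<n} (\<lambda>_. \<Phi>)))"
        using measurable_space[OF PK, of "(m, \<theta>)"] m \<theta>' by (simp add: space_pair_measure)
      then interpret PP: prob_space "PiM {..<n} (\<lambda>i. Ka (m i) \<theta>)" by (simp add: space_prob_algebra)
      have mm: "(\<lambda>\<phi>. (m, \<theta>, \<phi>)) \<in> measurable (PiM {..<n} (\<lambda>i. Ka (m i) \<theta>)) S"
      proof -
        have sK: "sets (PiM {..<n} (\<lambda>i. Ka (m i) \<theta>)) = sets (PiM {..<n} (\<lambda>_. \<Phi>))"
          using measurable_space[OF PK, of "(m, \<theta>)"] m \<theta>' by (simp add: space_pair_measure space_prob_algebra)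
        have "(\<lambda>\<phi>. (m, \<theta>, \<phi>)) \<in> measurable (PiM {..<n} (\<lambda>_. \<Phi>)) S"
          unfolding S_def SX_def using m \<theta>' by measurable
        then show ?thesis by (simp add: measurable_cong_sets[OF sK refl])
      qed
      show "distr (g m \<theta>) SY fst = return SY m"
        unfolding g_def by (subst distr_distr[OF fstS mm]) (simp add: comp_def m)
    qed
    also have "\<dots> = return SY m"
      by (rule bind_const') (simp_all add: KT.prob_space_axioms m prob_space_return prob_space_imp_subprob_space)
    finally show ?thesis .
  qed
  have "distr J SY fst = PiM {..<n} (\<lambda>_. T) \<bind> (\<lambda>m. distr (Kt m \<bind> g m) SY fst)"
    unfolding Jdef by (rule distr_bind[OF Km' ne fstS])
  also have "\<dots> = PiM {..<n} (\<lambda>_. T) \<bind> return SY"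
    by (rule bind_cong[OF refl]) (simp add: inner spT)
  also have "\<dots> = PiM {..<n} (\<lambda>_. T)" by (rule bind_return''[OF sT])
  finally have dJ: "distr J SY fst = PiM {..<n} (\<lambda>_. T)" .
  then show "distr J (PiM {..<n} (\<lambda>_. MSp)) fst = PiM {..<n} (\<lambda>_. T)" unfolding SY_def .
  show "prob_space J"
  proof (rule prob_space_distrD[of fst _ SY])
    show "fst \<in> measurable J SY" using fstS by (simp add: measurable_cong_sets[OF sJ[folded S_def[unfolded SY_def SX_def], unfolded SY_def SX_def] refl] S_def SY_def SX_def)
    show "prob_space (distr J SY fst)" unfolding dJ by (rule PT.prob_space_axioms)
  qed
qed



lemma prob_integral_bounds:
  fixes f :: "'a \<Rightarrow> real"
  assumes P: "prob_space M" and f: "f \<in> borel_measurable M"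
    and b: "\<And>x. x \<in> space M \<Longrightarrow> a \<le> f x \<and> f x \<le> b"
  shows "a \<le> integral\<^sup>L M f \<and> integral\<^sup>L M f \<le> b"
proof -
  interpret prob_space M by fact
  have int: "integrable M f"
    by (rule integrable_const_bound[where B="max \<bar>a\<bar> \<bar>b\<bar>"]) (use b f in \<open>auto intro!: AE_I2 simp: abs_le_iff, fastforce+\<close>)
  have "(\<integral>x. a \<partial>M) \<le> integral\<^sup>L M f"
    by (rule integral_mono_AE) (use int b in \<open>auto intro!: AE_I2\<close>)
  moreover have "integral\<^sup>L M f \<le> (\<integral>x. b \<partial>M)"
    by (rule integral_mono_AE) (use int b in \<open>auto intro!: AE_I2\<close>)
  ultimately show ?thesis by (simp add: prob_space)
qed

theorem theorem3:
  fixes pol :: "'p \<Rightarrow> 's::finite \<Rightarrow> 'a::finite pmf"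
    and MSp :: "('s, 'a) mdp measure"
    and T U :: "('s, 'a) mdp measure"
    and \<Theta> :: "'t measure" and \<Phi> :: "'p measure"
    and Kt :: "(nat \<Rightarrow> ('s, 'a) mdp) \<Rightarrow> 't measure"
    and Ka :: "('s, 'a) mdp \<Rightarrow> 't \<Rightarrow> 'p measure"
    and n H :: nat and \<gamma> :: real
  assumes n_pos: "0 < n"
    and gamma: "0 \<le> \<gamma>" "\<gamma> < 1"
    and valid: "\<forall>M\<in>space MSp. valid_mdp M"
    and T: "prob_space T" "sets T = sets MSp"
    and U: "prob_space U" "sets U = sets MSp"
    and Kt: "Kt \<in> measurable (PiM {..<n} (\<lambda>_. MSp)) (prob_algebra \<Theta>)"
    and Ka: "(\<lambda>(M, \<theta>). Ka M \<theta>) \<in> measurable (MSp \<Otimes>\<^sub>M \<Theta>) (prob_algebra \<Phi>)"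
    and J_meas: "(\<lambda>(\<phi>, M). Jret \<gamma> H (pol \<phi>) M) \<in> borel_measurable (\<Phi> \<Otimes>\<^sub>M MSp)"
    and KL_fin: "KL_finite (PiM {..<n} (\<lambda>_. T)) (PiM {..<n} (\<lambda>_. U))"
    and MI_fin: "MI_finite (joint_law MSp \<Theta> \<Phi> n (PiM {..<n} (\<lambda>_. T)) Kt Ka)
                   (\<Theta> \<Otimes>\<^sub>M PiM {..<n} (\<lambda>_. \<Phi>)) (PiM {..<n} (\<lambda>_. MSp)) snd fst"
  shows "(\<integral>x. emp_obj \<gamma> H pol Ka n (fst x) (fst (snd x)) - pop_obj \<gamma> H pol Ka U (fst (snd x))
            \<partial>(joint_law MSp \<Theta> \<Phi> n (PiM {..<n} (\<lambda>_. T)) Kt Ka))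
         \<le> sqrt ((2 * prob_space.mutual_information
                        (joint_law MSp \<Theta> \<Phi> n (PiM {..<n} (\<lambda>_. T)) Kt Ka) (exp 1)
                        (\<Theta> \<Otimes>\<^sub>M PiM {..<n} (\<lambda>_. \<Phi>)) (PiM {..<n} (\<lambda>_. MSp)) snd fst
                  + 2 * KLdiv (PiM {..<n} (\<lambda>_. T)) (PiM {..<n} (\<lambda>_. U)))
                 / (real n * (1 - \<gamma>) ^ 2))"
proof -
  define B where "B = 1 / (1 - \<gamma>)"
  have Bpos: "B > 0" using gamma by (simp add: B_def)
  define SX where "SX = \<Theta> \<Otimes>\<^sub>M PiM {..<n} (\<lambda>_. \<Phi>)"
  define SY where "SY = PiM {..<n} (\<lambda>_. MSp)"
  define hh where "hh M \<theta> = (\<integral>\<phi>. Jret \<gamma> H (pol \<phi>) M \<partial>(Ka M \<theta>))" for M \<theta>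
  have Kasp: "prob_space (Ka M \<theta>) \<and> sets (Ka M \<theta>) = sets \<Phi>" if "M \<in> space MSp" "\<theta> \<in> space \<Theta>" for M \<theta>
    using measurable_space[OF Ka, of "(M, \<theta>)"] that by (simp add: space_pair_measure space_prob_algebra)
  have Jb: "0 \<le> Jret \<gamma> H (pol \<phi>) M \<and> Jret \<gamma> H (pol \<phi>) M \<le> B" if "M \<in> space MSp" for M \<phi>
    using Jret_bounds[of M \<gamma> H "pol \<phi>"] valid that gamma by (simp add: B_def)
  have Jm: "(\<lambda>\<phi>. Jret \<gamma> H (pol \<phi>) M) \<in> borel_measurable \<Phi>" if "M \<in> space MSp" for M
    using measurable_Pair1[OF J_meas that] by simp
  have hhb: "0 \<le> hh M \<theta> \<and> hh M \<theta> \<le> B" if "M \<in> space MSp" "\<theta> \<in> space \<Theta>" for M \<theta>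
  proof -
    have "(\<lambda>\<phi>. Jret \<gamma> H (pol \<phi>) M) \<in> borel_measurable (Ka M \<theta>)"
      unfolding measurable_cong_sets[OF conjunct2[OF Kasp[OF that]] refl] by (rule Jm[OF that(1)])
    then show ?thesis unfolding hh_def
      by (rule prob_integral_bounds[OF conjunct1[OF Kasp[OF that]]])
         (use Jb[OF that(1)] in auto)
  qed
  have hhm[measurable]: "(\<lambda>(M, \<theta>). hh M \<theta>) \<in> borel_measurable (MSp \<Otimes>\<^sub>M \<Theta>)"
  proof -
    have sw: "(\<lambda>p. (snd p, fst (fst p))) \<in> measurable ((MSp \<Otimes>\<^sub>M \<Theta>) \<Otimes>\<^sub>M \<Phi>) (\<Phi> \<Otimes>\<^sub>M MSp)"
      by measurable
    have "(\<lambda>p. Jret \<gamma> H (pol (snd p)) (fst (fst p))) \<in> borel_measurable ((MSp \<Otimes>\<^sub>M \<Theta>) \<Otimes>\<^sub>M \<Phi>)"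
      using measurable_compose[OF sw J_meas] by simp
    then have f: "(\<lambda>(x, \<phi>). ennreal (Jret \<gamma> H (pol \<phi>) (fst x))) \<in> borel_measurable ((MSp \<Otimes>\<^sub>M \<Theta>) \<Otimes>\<^sub>M \<Phi>)"
      by (simp add: split_beta')
    have "(\<lambda>x. \<integral>\<^sup>+\<phi>. ennreal (Jret \<gamma> H (pol \<phi>) (fst x)) \<partial>((\<lambda>(M, \<theta>). Ka M \<theta>) x)) \<in> borel_measurable (MSp \<Otimes>\<^sub>M \<Theta>)"
      by (rule nn_integral_measurable_subprob_algebra2[OF f measurable_prob_algebraD[OF Ka]])
    then have m2: "(\<lambda>x. enn2real (\<integral>\<^sup>+\<phi>. ennreal (Jret \<gamma> H (pol \<phi>) (fst x)) \<partial>((\<lambda>(M, \<theta>). Ka M \<theta>) x))) \<in> borel_measurable (MSp \<Otimes>\<^sub>M \<Theta>)"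
      by measurable
    show ?thesis
    proof (rule measurable_cong[THEN iffD2, OF _ m2])
      fix x assume x: "x \<in> space (MSp \<Otimes>\<^sub>M \<Theta>)"
      then obtain M \<theta> where x': "x = (M, \<theta>)" "M \<in> space MSp" "\<theta> \<in> space \<Theta>" by (auto simp: space_pair_measure)
      have mm: "(\<lambda>\<phi>. Jret \<gamma> H (pol \<phi>) M) \<in> borel_measurable (Ka M \<theta>)"
        unfolding measurable_cong_sets[OF conjunct2[OF Kasp[OF x'(2,3)]] refl] by (rule Jm[OF x'(2)])
      have "hh M \<theta> = enn2real (\<integral>\<^sup>+\<phi>. ennreal (Jret \<gamma> H (pol \<phi>) M) \<partial>Ka M \<theta>)"
        unfolding hh_def by (rule integral_eq_nn_integral) (use mm Jb[OF x'(2)] in auto)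
      then show "(\<lambda>(M, \<theta>). hh M \<theta>) x = enn2real (\<integral>\<^sup>+\<phi>. ennreal (Jret \<gamma> H (pol \<phi>) (fst x)) \<partial>((\<lambda>(M, \<theta>). Ka M \<theta>) x))"
        using x' by simp
    qed
  qed
  define G where "G x y = emp_obj \<gamma> H pol Ka n y (fst x)" for x :: "'t \<times> (nat \<Rightarrow> 'p)" and y
  define Gbar where "Gbar x = pop_obj \<gamma> H pol Ka U (fst x)" for x :: "'t \<times> (nat \<Rightarrow> 'p)"
  have G_eq: "G x y = (1 / real n) * (\<Sum>i<n. hh (y i) (fst x))" for x y
    unfolding G_def emp_obj_def hh_def ..
  have Gbar_eq: "Gbar x = (\<integral>M. hh M (fst x) \<partial>U)" for x
    unfolding Gbar_def pop_obj_def hh_def ..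
  interpret U: prob_space U by (rule U(1))
  have mU: "measurable U = measurable MSp" by (rule ext, rule measurable_cong_sets[OF U(2) refl])
  have spU: "space U = space MSp" by (rule sets_eq_imp_space_eq[OF U(2)])
  have Gm: "(\<lambda>(x, y). G x y) \<in> borel_measurable (SX \<Otimes>\<^sub>M SY)"
    unfolding G_eq SX_def SY_def by measurable
  have Gbm: "Gbar \<in> borel_measurable SX"
  proof -
    have "(\<lambda>(x, M). hh M (fst x)) \<in> borel_measurable (SX \<Otimes>\<^sub>M U)"
    proof -
      have a: "(\<lambda>(x, M). hh M (fst x)) \<in> borel_measurable (SX \<Otimes>\<^sub>M MSp)"
        unfolding SX_def by measurable
      have sPU: "sets (SX \<Otimes>\<^sub>M U) = sets (SX \<Otimes>\<^sub>M MSp)" by (rule sets_pair_measure_cong[OF refl U(2)])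
      show ?thesis using a unfolding measurable_cong_sets[OF sPU refl] .
    qed
    then have "(\<lambda>x. \<integral>M. hh M (fst x) \<partial>U) \<in> borel_measurable SX"
      by (rule U.borel_measurable_lebesgue_integral)
    then show ?thesis unfolding Gbar_eq .
  qed
  have spSX: "space SX = space \<Theta> \<times> space (PiM {..<n} (\<lambda>_. \<Phi>))" unfolding SX_def by (simp add: space_pair_measure)
  have Gb: "\<bar>G x y\<bar> \<le> B" if x: "x \<in> space SX" and y: "y \<in> space SY" for x y
  proof -
    have th: "fst x \<in> space \<Theta>" using x spSX by auto
    have yi: "y i \<in> space MSp" if "i < n" for i using y that unfolding SY_def by (auto simp: space_PiM)
    have "0 \<le> (\<Sum>i<n. hh (y i) (fst x))" using hhb[OF yi th] by (intro sum_nonneg) auto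
    moreover have "(\<Sum>i<n. hh (y i) (fst x)) \<le> (\<Sum>i<n. B)" using hhb[OF yi th] by (intro sum_mono) auto
    ultimately have "0 \<le> G x y \<and> G x y \<le> B" unfolding G_eq using n_pos by (auto simp: field_simps)
    then show ?thesis by simp
  qed
  have hhU: "(\<lambda>M. hh M \<theta>) \<in> borel_measurable U" if "\<theta> \<in> space \<Theta>" for \<theta>
    unfolding mU using measurable_Pair1[OF hhm that] by simp
  have Gbb: "\<bar>Gbar x\<bar> \<le> B" if x: "x \<in> space SX" for x
  proof -
    have th: "fst x \<in> space \<Theta>" using x spSX by auto
    have "0 \<le> Gbar x \<and> Gbar x \<le> B" unfolding Gbar_eq
      by (rule prob_integral_bounds[OF U(1) hhU[OF th]]) (use hhb th in \<open>auto simp: spU\<close>)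
    then show ?thesis by simp
  qed
  define s where "s = B\<^sup>2 / (8 * real n)"
  have s: "s > 0" using Bpos n_pos by (simp add: s_def)
  have hoeff: "(\<integral>\<^sup>+y. ennreal (exp (l * (G x y - Gbar x))) \<partial>PiM {..<n} (\<lambda>_. U)) \<le> ennreal (exp (l\<^sup>2 * s))"
    if x: "x \<in> space SX" and l: "l > 0" for x l
  proof -
    have th: "fst x \<in> space \<Theta>" using x spSX by auto
    have "(\<integral>\<^sup>+y. ennreal (exp (l * ((1 / real n) * (\<Sum>i<n. hh (y i) (fst x)) - (\<integral>M. hh M (fst x) \<partial>U)))) \<partial>PiM {..<n} (\<lambda>_. U))
         \<le> ennreal (exp (l\<^sup>2 * B\<^sup>2 / (8 * real n)))"
      by (rule hoeff_prod[OF U(1) hhU[OF th] _ n_pos l]) (use hhb th in \<open>auto simp: spU\<close>)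
    then show ?thesis unfolding G_eq Gbar_eq s_def by (simp add: mult.assoc times_divide_eq_right)
  qed
  define J where "J = joint_law MSp \<Theta> \<Phi> n (PiM {..<n} (\<lambda>_. T)) Kt Ka"
  note jl = joint_law_props[OF T Kt Ka, folded joint_law_def, folded J_def]
  have sJ: "sets J = sets (SY \<Otimes>\<^sub>M SX)" using jl(1) unfolding SX_def SY_def .
  have dJ: "distr J SY fst = PiM {..<n} (\<lambda>_. T)" using jl(2) unfolding SY_def .
  have QY: "prob_space (PiM {..<n} (\<lambda>_. U))" by (rule prob_space_PiM) (use U in auto)
  have sQY: "sets (PiM {..<n} (\<lambda>_. U)) = sets SY" unfolding SY_def by (rule sets_PiM_cong) (use U in auto)
  have MI': "KL_finite (distr J (SX \<Otimes>\<^sub>M SY) (\<lambda>z. (snd z, fst z))) (distr J SX snd \<Otimes>\<^sub>M distr J SY fst)"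
    using MI_fin unfolding MI_finite_def J_def SX_def SY_def .
  have KLf: "KL_finite (distr J SY fst) (PiM {..<n} (\<lambda>_. U))" unfolding dJ by (rule KL_fin)
  note main = abstract_bound[OF jl(3) sJ QY sQY Gm Gbm Gb Gbb s hoeff MI' KLf]
  define I where "I = prob_space.mutual_information J (exp 1) SX SY snd fst"
  define D where "D = KLdiv (PiM {..<n} (\<lambda>_. T)) (PiM {..<n} (\<lambda>_. U))"
  have Ieq: "KLdiv (distr J (SX \<Otimes>\<^sub>M SY) (\<lambda>z. (snd z, fst z))) (distr J SX snd \<Otimes>\<^sub>M distr J SY fst) = I"
    unfolding I_def KLdiv_def prob_space.mutual_information_def[OF jl(3)] ..
  have Deq: "KLdiv (distr J SY fst) (PiM {..<n} (\<lambda>_. U)) = D" unfolding dJ D_def ..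
  have E: "(\<integral>z. G (snd z) (fst z) - Gbar (snd z) \<partial>J) \<le> 2 * sqrt (s * (I + D))" and V0: "0 \<le> I + D"
    using main unfolding Ieq Deq by auto
  have "2 * sqrt (s * (I + D)) \<le> sqrt ((2 * I + 2 * D) / (real n * (1 - \<gamma>) ^ 2))"
  proof -
    have X: "real n * (1 - \<gamma>) ^ 2 > 0" using n_pos gamma by simp
    have "2 * sqrt (s * (I + D)) = sqrt (4 * (s * (I + D)))" by (simp add: real_sqrt_mult)
    also have "4 * (s * (I + D)) = (I + D) / (2 * (real n * (1 - \<gamma>) ^ 2))"
      using gamma n_pos by (simp add: s_def B_def power_divide field_simps)
    also have "\<dots> \<le> (2 * I + 2 * D) / (real n * (1 - \<gamma>) ^ 2)"
      using V0 X by (simp add: divide_simps)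
    finally show ?thesis by (simp add: real_sqrt_le_mono)
  qed
  with E show ?thesis
    unfolding G_def Gbar_def J_def I_def D_def SX_def SY_def by simp
qed


end
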